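(* Let $\Gamma\subset\mathbb{R}^2$ be a lattice, let $\Lambda>0$ be a smooth $\Gamma$-periodic function on $\mathbb{R}^2$, let $n\ge3$, and let $F=\sum_{i=0}^n a_i(x,y)p_1^{n-i}p_2^i$ with smooth $\Gamma$-periodic $a_i$ satisfy $\{H,F\}=0$, $H=\frac{p_1^2+p_2^2}{2\Lambda}$. Assume the Kolokoltsov relations hold with constant $c_1=0$ and some constant $c_2$, i.e. $$a_{n-1}=\sum_{j\ge 0,\ 2j\le n-3}(-1)^j a_{n-3-2j},\qquad a_n=c_2+\sum_{j\ge 0,\ 2j\le n-2}(-1)^j a_{n-2-2j}.$$ Define $P,Q,R$ as follows. If $n=2k$: with $S_e=\sum_{j=0}^{k-1}(-1)^j(n-2j)a_{2j}$, $S_o=\sum_{j=0}^{k-2}(-1)^j(n-2-2j)a_{2j+1}$, put $P=S_e\Lambda$, $Q=-S_o\Lambda$, $R=(-S_e+(-1)^k nc_2)\Lambda$. If $n=2k+1$: with $T_e=\sum_{j=0}^{k-1}(-1)^j(n-1-2j)a_{2j}$, $T_o=\sum_{j=0}^{k-1}(-1)^j(n-1-2j)a_{2j+1}$, put $P=T_o\Lambda$, $Q=T_e\Lambda$, $R=(-T_o+(-1)^k nc_2)\Lambda$. Then $$P_x+Q_y=0,\qquad Q_x+R_y=0.$$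
   Context: The Poisson bracket is $\{H,F\}=\sum_{j=1}^2\left(\frac{\partial H}{\partial q^j}\frac{\partial F}{\partial p_j}-\frac{\partial H}{\partial p_j}\frac{\partial F}{\partial q^j}\right)$ with $(q^1,q^2)=(x,y)$; $\{H,F\}=0$ means $F$ is a first integral of the geodesic flow of the metric $\Lambda(dx^2+dy^2)$ on the torus $\mathbb{R}^2/\Gamma$. By a theorem of Kolokoltsov, for any such integral there are constants $c_1,c_2$ with $a_{n-1}=c_1+\sum_{j\ge0,2j\le n-3}(-1)^ja_{n-3-2j}$ and $a_n=c_2+\sum_{j\ge0,2j\le n-2}(-1)^ja_{n-2-2j}$; $c_1=0$ can be arranged by a rotation of the $(x,y)$-plane. *)

theory Defs
  imports "HOL-Analysis.Analysis"
begin

text \<open>Functions on the plane are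
  of type real \<times> real \<Rightarrow> real; functions on the cotangent bundle T*R^2 are
  of type (real \<times> real) \<Rightarrow> (real \<times> real) \<Rightarrow> real, taking (q, p) = ((x,y),(p1,p2)).\<close>

definition dx :: "(real \<times> real \<Rightarrow> real) \<Rightarrow> real \<times> real \<Rightarrow> real" where
  "dx f = (\<lambda>z. deriv (\<lambda>t. f (t, snd z)) (fst z))"

definition dy :: "(real \<times> real \<Rightarrow> real) \<Rightarrow> real \<times> real \<Rightarrow> real" where
  "dy f = (\<lambda>z. deriv (\<lambda>t. f (fst z, t)) (snd z))"

coinductive smooth2 :: "(real \<times> real \<Rightarrow> real) \<Rightarrow> bool" where
  "(\<forall>z. f differentiable (at z)) \<Longrightarrow> smooth2 (dx f) \<Longrightarrow> smooth2 (dy f) \<Longrightarrow> smooth2 f"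

definition is_lattice :: "(real \<times> real) set \<Rightarrow> bool" where
  "is_lattice \<Gamma> \<longleftrightarrow> (\<exists>e1 e2. fst e1 * snd e2 - snd e1 * fst e2 \<noteq> 0 \<and>
      \<Gamma> = {of_int m *\<^sub>R e1 + of_int k *\<^sub>R e2 | m k. True})"

definition periodic :: "(real \<times> real) set \<Rightarrow> (real \<times> real \<Rightarrow> real) \<Rightarrow> bool" where
  "periodic \<Gamma> f \<longleftrightarrow> (\<forall>z. \<forall>\<gamma>\<in>\<Gamma>. f (z + \<gamma>) = f z)"

definition dq1 :: "(real \<times> real \<Rightarrow> real \<times> real \<Rightarrow> real) \<Rightarrow> real \<times> real \<Rightarrow> real \<times> real \<Rightarrow> real" where
  "dq1 G q p = deriv (\<lambda>t. G (t, snd q) p) (fst q)"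
definition dq2 :: "(real \<times> real \<Rightarrow> real \<times> real \<Rightarrow> real) \<Rightarrow> real \<times> real \<Rightarrow> real \<times> real \<Rightarrow> real" where
  "dq2 G q p = deriv (\<lambda>t. G (fst q, t) p) (snd q)"
definition dp1 :: "(real \<times> real \<Rightarrow> real \<times> real \<Rightarrow> real) \<Rightarrow> real \<times> real \<Rightarrow> real \<times> real \<Rightarrow> real" where
  "dp1 G q p = deriv (\<lambda>t. G q (t, snd p)) (fst p)"
definition dp2 :: "(real \<times> real \<Rightarrow> real \<times> real \<Rightarrow> real) \<Rightarrow> real \<times> real \<Rightarrow> real \<times> real \<Rightarrow> real" where
  "dp2 G q p = deriv (\<lambda>t. G q (fst p, t)) (snd p)"

definition poisson :: "(real \<times> real \<Rightarrow> real \<times> real \<Rightarrow> real) \<Rightarrow> (real \<times> real \<Rightarrow> real \<times> real \<Rightarrow> real)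
    \<Rightarrow> real \<times> real \<Rightarrow> real \<times> real \<Rightarrow> real" where
  "poisson H F q p = dq1 H q p * dp1 F q p - dp1 H q p * dq1 F q p
                   + dq2 H q p * dp2 F q p - dp2 H q p * dq2 F q p"

definition funP :: "nat \<Rightarrow> (nat \<Rightarrow> real \<times> real \<Rightarrow> real) \<Rightarrow> real \<Rightarrow> (real \<times> real \<Rightarrow> real) \<Rightarrow> real \<times> real \<Rightarrow> real" where
  "funP n a c2 \<Lambda> z = (let k = n div 2 in
     if even n then (\<Sum>j=0..k-1. (-1)^j * (real n - 2 * real j) * a (2*j) z) * \<Lambda> z
     else (\<Sum>j=0..k-1. (-1)^j * (real n - 1 - 2 * real j) * a (2*j+1) z) * \<Lambda> z)"

definition funQ :: "nat \<Rightarrow> (nat \<Rightarrow> real \<times> real \<Rightarrow> real) \<Rightarrow> real \<Rightarrow> (real \<times> real \<Rightarrow> real) \<Rightarrow> real \<times> real \<Rightarrow> real" where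
  "funQ n a c2 \<Lambda> z = (let k = n div 2 in
     if even n then - (\<Sum>j=0..k-2. (-1)^j * (real n - 2 - 2 * real j) * a (2*j+1) z) * \<Lambda> z
     else (\<Sum>j=0..k-1. (-1)^j * (real n - 1 - 2 * real j) * a (2*j) z) * \<Lambda> z)"

definition funR :: "nat \<Rightarrow> (nat \<Rightarrow> real \<times> real \<Rightarrow> real) \<Rightarrow> real \<Rightarrow> (real \<times> real \<Rightarrow> real) \<Rightarrow> real \<times> real \<Rightarrow> real" where
  "funR n a c2 \<Lambda> z = (let k = n div 2 in
     if even n then (- (\<Sum>j=0..k-1. (-1)^j * (real n - 2 * real j) * a (2*j) z) + (-1)^k * real n * c2) * \<Lambda> z
     else (- (\<Sum>j=0..k-1. (-1)^j * (real n - 1 - 2 * real j) * a (2*j+1) z) + (-1)^k * real n * c2) * \<Lambda> z)"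

end

theory Submission
  imports Defs "HOL-Computational_Algebra.Polynomial"
begin


lemma smooth2_diff: "smooth2 f \<Longrightarrow> f differentiable (at z)"
  by (erule smooth2.cases) (cases z, auto)

lemma pdx: assumes "\<forall>z. f differentiable (at z)"
  shows "((\<lambda>t. f (t, y)) has_real_derivative dx f (x, y)) (at x)"
proof -
  have "(\<lambda>t. f (t, y)) differentiable (at x)"
    using differentiable_chain_at[of "\<lambda>t. (t,y)" x f] assms
    by (auto simp: o_def intro!: derivative_intros)
  thus ?thesis unfolding dx_def by (simp add: DERIV_deriv_iff_real_differentiable)
qed

lemma pdy: assumes "\<forall>z. f differentiable (at z)"
  shows "((\<lambda>t. f (x, t)) has_real_derivative dy f (x, y)) (at y)"
proof -
  have "(\<lambda>t. f (x, t)) differentiable (at y)"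
    using differentiable_chain_at[of "\<lambda>t. (x,t)" y f] assms
    by (auto simp: o_def intro!: derivative_intros)
  thus ?thesis unfolding dy_def by (simp add: DERIV_deriv_iff_real_differentiable)
qed

lemma pderiv_sum: "pderiv (sum f A) = (\<Sum>x\<in>A. pderiv (f x))"
  using higher_pderiv_sum[of 1 f A] by simp

definition Ev :: "(nat \<Rightarrow> 'a::comm_monoid_add) \<Rightarrow> nat \<Rightarrow> 'a" where
  "Ev g N = (\<Sum>j\<in>{j. 2*j \<le> N}. g (N - 2*j))"

lemma setj: "{j::nat. 2*j \<le> N} = {..N div 2}" by auto

lemma Ev_step: "Ev g (Suc (Suc N)) = g (Suc (Suc N)) + Ev g N"
proof -
  have "Suc (Suc N) div 2 = Suc (N div 2)" by simp
  thus ?thesis unfolding Ev_def setj by (simp only: sum.atMost_Suc_shift) simp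
qed

lemma Ev_0: "Ev g 0 = g 0" unfolding Ev_def setj by simp
lemma Ev_1: "Ev g (Suc 0) = g (Suc 0)" unfolding Ev_def setj by simp

lemma sum_Ev: "(\<Sum>m\<le>Suc N. g m) = Ev g (Suc N) + Ev g N"
proof (induction N rule: nat_less_induct)
  case (1 N)
  show ?case
  proof (cases N)
    case 0 thus ?thesis by (simp add: Ev_0 Ev_1 add_ac)
  next
    case (Suc M)
    have "(\<Sum>m\<le>Suc N. g m) = (\<Sum>m\<le>Suc M. g m) + g (Suc N)" using Suc by simp
    also have "\<dots> = Ev g (Suc M) + Ev g M + g (Suc N)" using 1 Suc by simp
    also have "\<dots> = Ev g (Suc N) + Ev g N" using Suc by (simp add: Ev_step add_ac)
    finally show ?thesis .
  qed
qed


lemma Ev_L0: "\<i>^N * complex_of_real (\<Sum>j\<in>{j. 2*j \<le> N}. (-1)^j * B (N - 2*j))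
   = Ev (\<lambda>m. complex_of_real (B m) * \<i>^m) N"
  unfolding Ev_def of_real_sum sum_distrib_left
proof (rule sum.cong[OF refl])
  fix j assume "j \<in> {j. 2*j \<le> N}"
  hence N: "N = (N - 2*j) + 2*j" by simp
  have "\<i>^N = \<i>^(N-2*j) * (-1)^j"
    by (subst N) (simp add: power_add power_mult)
  thus "\<i>^N * complex_of_real ((-1)^j * B (N - 2*j)) = complex_of_real (B (N - 2*j)) * \<i>^(N - 2*j)"
    by simp
qed

lemma kolZ:
  fixes B :: "nat \<Rightarrow> real"
  assumes n3: "n \<ge> 3"
    and k1: "B (n-1) = (\<Sum>j\<in>{j. 2*j \<le> n-3}. (-1)^j * B (n-3-2*j))"
    and k2: "B n = c + (\<Sum>j\<in>{j. 2*j \<le> n-2}. (-1)^j * B (n-2-2*j))"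
  shows "(\<Sum>m\<le>n. complex_of_real (B m) * \<i>^m) = \<i>^n * complex_of_real c"
proof -
  define g where "g m = complex_of_real (B m) * \<i>^m" for m
  have "n = Suc (Suc (Suc (n-3)))" using n3 by arith
  then obtain m where m: "n = Suc (Suc (Suc m))" by blast
  have e1: "Ev g (n-2) = \<i>^(n-2) * complex_of_real (\<Sum>j\<in>{j. 2*j \<le> n-2}. (-1)^j * B (n-2-2*j))"
    using Ev_L0[of "n-2" B] unfolding g_def by simp
  have e2: "Ev g (n-3) = \<i>^(n-3) * complex_of_real (\<Sum>j\<in>{j. 2*j \<le> n-3}. (-1)^j * B (n-3-2*j))"
    using Ev_L0[of "n-3" B] unfolding g_def by simp
  have p2: "\<i>^n = -(\<i>^(n-2))" and p3: "\<i>^(n-1) = -(\<i>^(n-3))" using m by simp_all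
  have "(\<Sum>m\<le>n. g m) = Ev g n + Ev g (n-1)"
    using sum_Ev[of g "Suc (Suc m)"] m by simp
  also have "\<dots> = g n + Ev g (n-2) + g (n-1) + Ev g (n-3)"
    using Ev_step[of g "Suc m"] Ev_step[of g m] m by simp
  also have "\<dots> = \<i>^n * complex_of_real c"
  proof -
    have "g (n-1) = - Ev g (n-3)" unfolding e2 g_def
      by (subst k1) (simp only: p3 mult_minus_left mult_minus_right mult.commute)
    moreover have "g n = \<i>^n * complex_of_real c - Ev g (n-2)"
    proof -
      define S where "S = (\<Sum>j\<in>{j. 2*j \<le> n-2}. (-1)^j * B (n-2-2*j))"
      have "g n = complex_of_real (c + S) * \<i>^n" unfolding g_def S_def using k2 by simp
      also have "\<dots> = \<i>^n * complex_of_real c - \<i>^(n-2) * complex_of_real S"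
        unfolding p2 by (simp add: algebra_simps)
      finally show ?thesis unfolding e1 S_def .
    qed
    ultimately show ?thesis by simp
  qed
  finally show ?thesis unfolding g_def .
qed



definition Zs :: "nat \<Rightarrow> (nat \<Rightarrow> real) \<Rightarrow> complex" where
  "Zs n B = (\<Sum>m\<le>n. complex_of_real (B m) * \<i>^m)"
definition Ws :: "nat \<Rightarrow> (nat \<Rightarrow> real) \<Rightarrow> complex" where
  "Ws n B = (\<Sum>m\<le>n. of_nat (n-m) * complex_of_real (B m) * \<i>^m)"
definition Vs :: "nat \<Rightarrow> (nat \<Rightarrow> real) \<Rightarrow> complex" where
  "Vs n B = (\<Sum>m\<le>n. of_nat m * complex_of_real (B m) * \<i>^(m-1))"

lemma V_rel: "\<i> * Vs n B = of_nat n * Zs n B - Ws n B"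
proof -
  have "\<i> * Vs n B = (\<Sum>m\<le>n. of_nat m * complex_of_real (B m) * \<i>^m)"
    unfolding Vs_def sum_distrib_left
  proof (rule sum.cong[OF refl])
    fix m show "\<i> * (of_nat m * complex_of_real (B m) * \<i> ^ (m - 1)) = of_nat m * complex_of_real (B m) * \<i> ^ m"
      by (cases m) auto
  qed
  also have "\<dots> = of_nat n * Zs n B - Ws n B"
    unfolding Zs_def Ws_def sum_distrib_left sum_subtractf[symmetric]
  proof (rule sum.cong[OF refl])
    fix m assume "m \<in> {..n}"
    hence "of_nat n = (of_nat (n-m) + of_nat m :: complex)" by (simp flip: of_nat_add)
    thus "of_nat m * complex_of_real (B m) * \<i> ^ m = of_nat n * (complex_of_real (B m) * \<i> ^ m) - of_nat (n - m) * complex_of_real (B m) * \<i> ^ m"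
      by (simp add: algebra_simps)
  qed
  finally show ?thesis .
qed

lemma split_sum: fixes h :: "nat \<Rightarrow> 'a::comm_monoid_add" and M :: nat shows "(\<Sum>m<2*M. h m) = (\<Sum>j<M. h (2*j)) + (\<Sum>j<M. h (2*j+1))"
  by (induction M) (simp_all add: add_ac)

lemma ipow_even: "\<i>^(2*j) = complex_of_real ((-1)^j)"
  by (simp add: power_mult)
lemma ipow_odd: "\<i>^(2*j+1) = \<i> * complex_of_real ((-1)^j)"
  by (simp add: power_mult)

lemma even_W:
  assumes n: "n = 2*k" and k: "k \<ge> 1"
  shows "Ws n B = complex_of_real (\<Sum>j<k. (-1)^j * (real n - 2*real j) * B(2*j))
     + \<i> * complex_of_real ((\<Sum>j<k-1. (-1)^j * (real n - 2 - 2*real j) * B(2*j+1))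
                            + (\<Sum>j<k. (-1)^j * B(2*j+1)))"
proof -
  define h where "h m = of_nat (n-m) * complex_of_real (B m) * \<i>^m" for m
  have nk: "{..n} = {..<Suc (2*k)}" using n by auto
  have "Ws n B = (\<Sum>m<2*k. h m) + h (2*k)"
    unfolding Ws_def h_def nk by (rule sum.lessThan_Suc)
  also have "h (2*k) = 0" unfolding h_def n by simp
  also have "(\<Sum>m<2*k. h m) = (\<Sum>j<k. h (2*j)) + (\<Sum>j<k. h (2*j+1))" by (rule split_sum)
  also have "(\<Sum>j<k. h (2*j)) = complex_of_real (\<Sum>j<k. (-1)^j * (real n - 2*real j) * B(2*j))"
    unfolding of_real_sum
  proof (rule sum.cong[OF refl])
    fix j assume "j \<in> {..<k}"
    hence "(of_nat (n - 2*j)::complex) = complex_of_real (real n - 2 * real j)" using n by (simp add: of_nat_diff)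
    thus "h (2*j) = complex_of_real ((-1)^j * (real n - 2*real j) * B(2*j))"
      unfolding h_def ipow_even by (simp only: of_real_mult) simp
  qed
  also have "(\<Sum>j<k. h (2*j+1)) = \<i> * complex_of_real (\<Sum>j<k. (-1)^j * (real n - 1 - 2*real j) * B(2*j+1))"
    unfolding of_real_sum sum_distrib_left
  proof (rule sum.cong[OF refl])
    fix j assume "j \<in> {..<k}"
    hence "(of_nat (n - (2*j+1))::complex) = complex_of_real (real n - 1 - 2 * real j)" using n by (simp add: of_nat_diff)
    thus "h (2*j+1) = \<i> * complex_of_real ((-1)^j * (real n - 1 - 2*real j) * B(2*j+1))"
      unfolding h_def ipow_odd by (simp only: of_real_mult) (simp add: algebra_simps)
  qed
  also have "(\<Sum>j<k. (-1)^j * (real n - 1 - 2*real j) * B(2*j+1)) =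
     (\<Sum>j<k-1. (-1)^j * (real n - 2 - 2*real j) * B(2*j+1)) + (\<Sum>j<k. (-1)^j * B(2*j+1))"
  proof -
    have "(\<Sum>j<k. (-1)^j * (real n - 1 - 2*real j) * B(2*j+1)) =
       (\<Sum>j<k. (-1)^j * (real n - 2 - 2*real j) * B(2*j+1)) + (\<Sum>j<k. (-1)^j * B(2*j+1))"
      by (simp add: sum.distrib[symmetric] algebra_simps)
    moreover have "(\<Sum>j<k. (-1)^j * (real n - 2 - 2*real j) * B(2*j+1)) = (\<Sum>j<k-1. (-1)^j * (real n - 2 - 2*real j) * B(2*j+1))"
    proof -
      define f where "f j = (-1)^j * (real n - 2 - 2*real j) * B(2*j+1)" for j
      have kk: "k = Suc (k-1)" using k by simp
      have "(\<Sum>j<k. f j) = (\<Sum>j<Suc (k-1). f j)" using kk by simp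
      also have "\<dots> = (\<Sum>j<k-1. f j) + f (k-1)" by (rule sum.lessThan_Suc)
      also have "f (k-1) = 0" unfolding f_def using n k by (simp add: of_nat_diff)
      finally show ?thesis unfolding f_def by simp
    qed
    ultimately show ?thesis by simp
  qed
  finally show ?thesis by simp
qed

lemma even_Z:
  assumes n: "n = 2*k"
  shows "Zs n B = complex_of_real (\<Sum>j\<le>k. (-1)^j * B(2*j)) + \<i> * complex_of_real (\<Sum>j<k. (-1)^j * B(2*j+1))"
proof -
  define h where "h m = complex_of_real (B m) * \<i>^m" for m
  have nk: "{..n} = {..<Suc (2*k)}" using n by auto
  have "Zs n B = (\<Sum>m<2*k. h m) + h (2*k)"
    unfolding Zs_def h_def nk by (rule sum.lessThan_Suc)
  also have "(\<Sum>m<2*k. h m) = (\<Sum>j<k. h (2*j)) + (\<Sum>j<k. h (2*j+1))" by (rule split_sum)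
  finally show ?thesis
    unfolding h_def ipow_even ipow_odd of_real_sum sum_distrib_left lessThan_Suc_atMost[symmetric]
    by (simp add: algebra_simps)
qed

lemma odd_W:
  assumes n: "n = 2*k+1"
  shows "Ws n B = complex_of_real ((\<Sum>j<k. (-1)^j * (real n - 1 - 2*real j) * B(2*j)) + (\<Sum>j\<le>k. (-1)^j * B(2*j)))
     + \<i> * complex_of_real (\<Sum>j<k. (-1)^j * (real n - 1 - 2*real j) * B(2*j+1))"
proof -
  define h where "h m = of_nat (n-m) * complex_of_real (B m) * \<i>^m" for m
  have nk: "{..n} = {..<2*(k+1)}" using n by auto
  have "Ws n B = (\<Sum>m<2*(k+1). h m)"
    unfolding Ws_def h_def nk ..
  also have "\<dots> = (\<Sum>j<k+1. h (2*j)) + (\<Sum>j<k+1. h (2*j+1))" by (rule split_sum)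
  also have "(\<Sum>j<k+1. h (2*j)) = complex_of_real (\<Sum>j<k+1. (-1)^j * (real n - 2*real j) * B(2*j))"
    unfolding of_real_sum
  proof (rule sum.cong[OF refl])
    fix j assume "j \<in> {..<k+1}"
    hence "(of_nat (n - 2*j)::complex) = complex_of_real (real n - 2 * real j)" using n by (simp add: of_nat_diff)
    thus "h (2*j) = complex_of_real ((-1)^j * (real n - 2*real j) * B(2*j))"
      unfolding h_def ipow_even by (simp only: of_real_mult) simp
  qed
  also have "(\<Sum>j<k+1. h (2*j+1)) = \<i> * complex_of_real (\<Sum>j<k+1. (-1)^j * (real n - 1 - 2*real j) * B(2*j+1))"
    unfolding of_real_sum sum_distrib_left
  proof (rule sum.cong[OF refl])
    fix j assume "j \<in> {..<k+1}"
    hence "(of_nat (n - (2*j+1))::complex) = complex_of_real (real n - 1 - 2 * real j)" using n by (simp add: of_nat_diff)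
    thus "h (2*j+1) = \<i> * complex_of_real ((-1)^j * (real n - 1 - 2*real j) * B(2*j+1))"
      unfolding h_def ipow_odd by (simp only: of_real_mult) (simp add: algebra_simps)
  qed
  also have "(\<Sum>j<k+1. (-1)^j * (real n - 1 - 2*real j) * B(2*j+1)) = (\<Sum>j<k. (-1)^j * (real n - 1 - 2*real j) * B(2*j+1))"
    using n by simp
  also have "(\<Sum>j<k+1. (-1)^j * (real n - 2*real j) * B(2*j)) =
      (\<Sum>j<k. (-1)^j * (real n - 1 - 2*real j) * B(2*j)) + (\<Sum>j\<le>k. (-1)^j * B(2*j))"
  proof -
    have "(\<Sum>j<k+1. (-1)^j * (real n - 2*real j) * B(2*j)) =
      (\<Sum>j<k+1. (-1)^j * (real n - 1 - 2*real j) * B(2*j)) + (\<Sum>j<k+1. (-1)^j * B(2*j))"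
      by (simp add: sum.distrib[symmetric] algebra_simps)
    moreover have "(\<Sum>j<k+1. (-1)^j * (real n - 1 - 2*real j) * B(2*j)) = (\<Sum>j<k. (-1)^j * (real n - 1 - 2*real j) * B(2*j))"
      using n by simp
    moreover have e: "{..k} = {..<k+1}" by auto
    ultimately show ?thesis unfolding e using n by simp
  qed
  finally show ?thesis by simp
qed

lemma odd_Z:
  assumes n: "n = 2*k+1"
  shows "Zs n B = complex_of_real (\<Sum>j\<le>k. (-1)^j * B(2*j)) + \<i> * complex_of_real (\<Sum>j\<le>k. (-1)^j * B(2*j+1))"
proof -
  define h where "h m = complex_of_real (B m) * \<i>^m" for m
  have nk: "{..n} = {..<2*(k+1)}" using n by auto
  have "Zs n B = (\<Sum>m<2*(k+1). h m)"
    unfolding Zs_def h_def nk ..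
  also have "\<dots> = (\<Sum>j<k+1. h (2*j)) + (\<Sum>j<k+1. h (2*j+1))" by (rule split_sum)
  also have "{..<k+1} = {..k}" by auto
  finally show ?thesis
    unfolding h_def ipow_even ipow_odd of_real_sum sum_distrib_left
    by (simp add: algebra_simps)
qed



lemma V_rel0: "\<i> * Vs n B = (\<Sum>m\<le>n. of_nat m * complex_of_real (B m) * \<i>^m)"
  unfolding Vs_def sum_distrib_left
proof (rule sum.cong[OF refl])
  fix m show "\<i> * (of_nat m * complex_of_real (B m) * \<i> ^ (m - 1)) = of_nat m * complex_of_real (B m) * \<i> ^ m"
    by (cases m) auto
qed

lemma V_shift: "(\<Sum>i\<le>n. of_nat (i+1) * complex_of_real (B i) * \<i>^i) = Zs n B + \<i> * Vs n B"
  unfolding V_rel0 Zs_def sum.distrib[symmetric] by (rule sum.cong) (auto simp: algebra_simps)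

lemma infinite_range_of_real: "infinite (range (complex_of_real))"
proof
  assume "finite (range complex_of_real)"
  hence "finite (UNIV :: real set)" using finite_imageD[of complex_of_real UNIV] inj_of_real
    by (metis inj_def)
  thus False using infinite_UNIV_char_0 by blast
qed

lemma polyE:
  fixes A X Y :: "nat \<Rightarrow> real" and L Lx Ly :: real
  assumes Phi: "\<And>t. (1+t^2)*Lx*(\<Sum>i\<le>n. real(n-i)*A i*t^i) + (1+t^2)*Ly*(\<Sum>i\<le>n. real i*A i*t^(i-1))
      + 2*L*(\<Sum>i\<le>n. X i*t^i) + 2*L*(t*(\<Sum>i\<le>n. Y i*t^i)) = 0"
  shows "2*\<i>*(of_real Lx * Ws n A + of_real Ly * Vs n A) + 2* of_real L*(Vs n X + Zs n Y + \<i> * Vs n Y) = 0"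
proof -
  define wp :: "complex poly" where "wp = (\<Sum>i\<le>n. monom (of_nat (n-i) * of_real (A i)) i)"
  define vp :: "complex poly" where "vp = (\<Sum>i\<le>n. monom (of_nat i * of_real (A i)) (i-1))"
  define xp :: "complex poly" where "xp = (\<Sum>i\<le>n. monom (of_real (X i)) i)"
  define yp :: "complex poly" where "yp = (\<Sum>i\<le>n. monom (of_real (Y i)) (i+1))"
  define G where "G = smult (of_real Lx) wp + smult (of_real Ly) vp"
  define Pc where "Pc = [:1,0,1:] * G + smult (of_real (2*L)) (xp + yp)"
  have ev: "poly Pc (of_real t) = 0" for t
  proof -
    have "poly Pc (of_real t) = of_real ((1+t^2)*Lx*(\<Sum>i\<le>n. real(n-i)*A i*t^i) + (1+t^2)*Ly*(\<Sum>i\<le>n. real i*A i*t^(i-1))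
      + 2*L*(\<Sum>i\<le>n. X i*t^i) + 2*L*(t*(\<Sum>i\<le>n. Y i*t^i)))"
      unfolding Pc_def G_def wp_def vp_def xp_def yp_def
      by (simp add: poly_sum poly_monom of_real_sum sum_distrib_left algebra_simps power2_eq_square)
    thus ?thesis by (simp only: Phi of_real_0)
  qed
  have "Pc = 0"
  proof (rule ccontr)
    assume "Pc \<noteq> 0"
    hence "finite {z. poly Pc z = 0}" by (rule poly_roots_finite)
    moreover have "range complex_of_real \<subseteq> {z. poly Pc z = 0}" using ev by auto
    ultimately show False using infinite_range_of_real finite_subset by blast
  qed
  hence "poly (pderiv Pc) \<i> = 0" by simp
  moreover have "pderiv Pc = [:1,0,1:] * pderiv G + G * [:0,2:] + smult (of_real (2*L)) (pderiv xp + pderiv yp)"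
    unfolding Pc_def by (simp add: pderiv_mult pderiv_add pderiv_smult pderiv_pCons numeral_mult_conv_smult)
  moreover have "poly G \<i> = of_real Lx * Ws n A + of_real Ly * Vs n A"
    unfolding G_def wp_def vp_def Ws_def Vs_def by (simp add: poly_sum poly_monom sum_distrib_left)
  moreover have "poly (pderiv xp) \<i> = Vs n X"
    unfolding xp_def Vs_def by (simp add: pderiv_sum pderiv_monom poly_sum poly_monom)
  moreover have "poly (pderiv yp) \<i> = Zs n Y + \<i> * Vs n Y"
    unfolding yp_def V_shift[symmetric] by (simp add: pderiv_sum pderiv_monom poly_sum poly_monom)
  ultimately show ?thesis by (simp add: algebra_simps)
qed



lemma dx_at: "dx g (x,y) = deriv (\<lambda>t. g (t,y)) x" by (simp add: dx_def)
lemma dy_at: "dy g (x,y) = deriv (\<lambda>t. g (x,t)) y" by (simp add: dy_def)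

lemma DERIV_linx:
  assumes "\<And>j. j \<in> J \<Longrightarrow> \<forall>z. a (f j) differentiable (at z)"
  shows "((\<lambda>t. \<Sum>j\<in>J. c j * a (f j) (t,y)) has_real_derivative (\<Sum>j\<in>J. c j * dx (a (f j)) (x,y))) (at x)"
  by (rule DERIV_sum, rule DERIV_cmult, rule pdx, rule assms)

lemma DERIV_liny:
  assumes "\<And>j. j \<in> J \<Longrightarrow> \<forall>z. a (f j) differentiable (at z)"
  shows "((\<lambda>t. \<Sum>j\<in>J. c j * a (f j) (x,t)) has_real_derivative (\<Sum>j\<in>J. c j * dy (a (f j)) (x,y))) (at y)"
  by (rule DERIV_sum, rule DERIV_cmult, rule pdy, rule assms)

lemma DERIV_fx:
  assumes "\<And>j. j \<in> J \<Longrightarrow> \<forall>z. a (f j) differentiable (at z)" "\<forall>z. \<Lambda> differentiable (at z)"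
  shows "dx (\<lambda>z. (s * (\<Sum>j\<in>J. c j * a (f j) z) + K) * \<Lambda> z) (x,y)
     = (s * (\<Sum>j\<in>J. c j * dx (a (f j)) (x,y)) + 0) * \<Lambda> (x,y) + dx \<Lambda> (x,y) * (s * (\<Sum>j\<in>J. c j * a (f j) (x,y)) + K)"
  apply (subst dx_at)
  apply (rule DERIV_imp_deriv)
  apply (rule DERIV_mult[OF DERIV_add[OF DERIV_cmult[OF DERIV_linx] DERIV_const] pdx])
  using assms by auto

lemma DERIV_fy:
  assumes "\<And>j. j \<in> J \<Longrightarrow> \<forall>z. a (f j) differentiable (at z)" "\<forall>z. \<Lambda> differentiable (at z)"
  shows "dy (\<lambda>z. (s * (\<Sum>j\<in>J. c j * a (f j) z) + K) * \<Lambda> z) (x,y)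
     = (s * (\<Sum>j\<in>J. c j * dy (a (f j)) (x,y)) + 0) * \<Lambda> (x,y) + dy \<Lambda> (x,y) * (s * (\<Sum>j\<in>J. c j * a (f j) (x,y)) + K)"
  apply (subst dy_at)
  apply (rule DERIV_imp_deriv)
  apply (rule DERIV_mult[OF DERIV_add[OF DERIV_cmult[OF DERIV_liny] DERIV_const] pdy])
  using assms by auto

lemma PhiLemma:
  fixes \<Lambda> :: "real \<times> real \<Rightarrow> real" and a :: "nat \<Rightarrow> real \<times> real \<Rightarrow> real"
  assumes Lpos: "\<And>z. \<Lambda> z > 0" and DL: "\<forall>z. \<Lambda> differentiable (at z)"
    and Da: "\<And>i. i \<le> n \<Longrightarrow> \<forall>z. a i differentiable (at z)"
    and integral: "poisson (\<lambda>q p. (fst p ^ 2 + snd p ^ 2) / (2 * \<Lambda> q))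
                         (\<lambda>q p. \<Sum>i=0..n. a i q * fst p ^ (n - i) * snd p ^ i) (x,y) (1,t) = 0"
  shows "(1+t^2)*dx \<Lambda> (x,y)*(\<Sum>i\<le>n. real(n-i)*a i (x,y)*t^i) + (1+t^2)*dy \<Lambda> (x,y)*(\<Sum>i\<le>n. real i*a i (x,y)*t^(i-1))
      + 2*\<Lambda> (x,y)*(\<Sum>i\<le>n. dx (a i) (x,y)*t^i) + 2*\<Lambda> (x,y)*(t*(\<Sum>i\<le>n. dy (a i) (x,y)*t^i)) = 0"
proof -
  define L where "L = \<Lambda> (x,y)"
  define Lx where "Lx = dx \<Lambda> (x,y)"
  define Ly where "Ly = dy \<Lambda> (x,y)"
  have L0: "L > 0" unfolding L_def by (rule Lpos)
  have h1: "dq1 (\<lambda>q p. (fst p ^ 2 + snd p ^ 2) / (2 * \<Lambda> q)) (x,y) (1,t) = - (1+t^2) * Lx / (2 * L^2)"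
    unfolding dq1_def fst_conv snd_conv
    apply (rule DERIV_imp_deriv)
    using pdx[OF DL, of y x] L0 unfolding L_def Lx_def
    by (auto intro!: derivative_eq_intros simp: field_simps power2_eq_square)
  have h2: "dq2 (\<lambda>q p. (fst p ^ 2 + snd p ^ 2) / (2 * \<Lambda> q)) (x,y) (1,t) = - (1+t^2) * Ly / (2 * L^2)"
    unfolding dq2_def fst_conv snd_conv
    apply (rule DERIV_imp_deriv)
    using pdy[OF DL, of x y] L0 unfolding L_def Ly_def
    by (auto intro!: derivative_eq_intros simp: field_simps power2_eq_square)
  have h3: "dp1 (\<lambda>q p. (fst p ^ 2 + snd p ^ 2) / (2 * \<Lambda> q)) (x,y) (1,t) = 1 / L"
    unfolding dp1_def fst_conv snd_conv
    apply (rule DERIV_imp_deriv)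
    using L0 unfolding L_def
    by (auto intro!: derivative_eq_intros simp: field_simps power2_eq_square)
  have h4: "dp2 (\<lambda>q p. (fst p ^ 2 + snd p ^ 2) / (2 * \<Lambda> q)) (x,y) (1,t) = t / L"
    unfolding dp2_def fst_conv snd_conv
    apply (rule DERIV_imp_deriv)
    using L0 unfolding L_def
    by (auto intro!: derivative_eq_intros simp: field_simps power2_eq_square)
  have f1: "dq1 (\<lambda>q p. \<Sum>i=0..n. a i q * fst p ^ (n - i) * snd p ^ i) (x,y) (1,t) = (\<Sum>i\<le>n. dx (a i) (x,y)*t^i)"
    unfolding dq1_def fst_conv snd_conv atLeast0AtMost
    apply (rule DERIV_imp_deriv)
    apply (rule DERIV_sum)
    using pdx[OF Da] by (auto intro!: derivative_eq_intros)
  have f2: "dq2 (\<lambda>q p. \<Sum>i=0..n. a i q * fst p ^ (n - i) * snd p ^ i) (x,y) (1,t) = (\<Sum>i\<le>n. dy (a i) (x,y)*t^i)"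
    unfolding dq2_def fst_conv snd_conv atLeast0AtMost
    apply (rule DERIV_imp_deriv)
    apply (rule DERIV_sum)
    using pdy[OF Da] by (auto intro!: derivative_eq_intros)
  have f3: "dp1 (\<lambda>q p. \<Sum>i=0..n. a i q * fst p ^ (n - i) * snd p ^ i) (x,y) (1,t) = (\<Sum>i\<le>n. real(n-i)*a i (x,y)*t^i)"
    unfolding dp1_def fst_conv snd_conv atLeast0AtMost
    apply (rule DERIV_imp_deriv)
    apply (rule DERIV_sum)
    by (auto intro!: derivative_eq_intros)
  have f4: "dp2 (\<lambda>q p. \<Sum>i=0..n. a i q * fst p ^ (n - i) * snd p ^ i) (x,y) (1,t) = (\<Sum>i\<le>n. real i*a i (x,y)*t^(i-1))"
    unfolding dp2_def fst_conv snd_conv atLeast0AtMost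
    apply (rule DERIV_imp_deriv)
    apply (rule DERIV_sum)
    by (auto intro!: derivative_eq_intros)
  define SW where "SW = (\<Sum>i\<le>n. real(n-i)*a i (x,y)*t^i)"
  define SV where "SV = (\<Sum>i\<le>n. real i*a i (x,y)*t^(i-1))"
  define SX where "SX = (\<Sum>i\<le>n. dx (a i) (x,y)*t^i)"
  define SY where "SY = (\<Sum>i\<le>n. dy (a i) (x,y)*t^i)"
  have eq: "(- (1+t^2) * Lx / (2 * L^2)) * SW - (1/L) * SX + (- (1+t^2) * Ly / (2 * L^2)) * SV - (t/L) * SY = 0"
    using integral unfolding poisson_def h1 h2 h3 h4 f1 f2 f3 f4 SW_def SV_def SX_def SY_def .
  have "(1+t^2)*Lx*SW + (1+t^2)*Ly*SV + 2*L*SX + 2*L*(t*SY)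
     = -(2*L^2) * ((- (1+t^2) * Lx / (2 * L^2)) * SW - (1/L) * SX + (- (1+t^2) * Ly / (2 * L^2)) * SV - (t/L) * SY)"
    using L0 by (simp add: field_simps power2_eq_square)
  also have "\<dots> = 0" using eq by simp
  finally show ?thesis unfolding SW_def SV_def SX_def SY_def L_def Lx_def Ly_def .
qed



theorem theorem2:
  fixes \<Gamma> :: "(real \<times> real) set" and \<Lambda> :: "real \<times> real \<Rightarrow> real"
    and a :: "nat \<Rightarrow> real \<times> real \<Rightarrow> real" and n :: nat and c2 :: real
  assumes lat: "is_lattice \<Gamma>"
    and Lpos: "\<And>z. \<Lambda> z > 0" and Lsmooth: "smooth2 \<Lambda>" and Lper: "periodic \<Gamma> \<Lambda>"
    and n3: "n \<ge> 3"
    and asmooth: "\<And>i. i \<le> n \<Longrightarrow> smooth2 (a i)"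
    and aper: "\<And>i. i \<le> n \<Longrightarrow> periodic \<Gamma> (a i)"
    and integral: "\<And>q p. poisson (\<lambda>q p. (fst p ^ 2 + snd p ^ 2) / (2 * \<Lambda> q))
                         (\<lambda>q p. \<Sum>i=0..n. a i q * fst p ^ (n - i) * snd p ^ i) q p = 0"
    and kol1: "\<And>z. a (n - 1) z = (\<Sum>j\<in>{j. 2 * j \<le> n - 3}. (-1)^j * a (n - 3 - 2 * j) z)"
    and kol2: "\<And>z. a n z = c2 + (\<Sum>j\<in>{j. 2 * j \<le> n - 2}. (-1)^j * a (n - 2 - 2 * j) z)"
  shows "\<forall>z. dx (funP n a c2 \<Lambda>) z + dy (funQ n a c2 \<Lambda>) z = 0 \<and>
             dx (funQ n a c2 \<Lambda>) z + dy (funR n a c2 \<Lambda>) z = 0"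
proof
  fix z :: "real \<times> real"
  obtain x y where z: "z = (x,y)" by (cases z)
  have Da: "\<And>i. i \<le> n \<Longrightarrow> \<forall>z. a i differentiable (at z)" using asmooth smooth2_diff by blast
  have DL: "\<forall>z. \<Lambda> differentiable (at z)" using Lsmooth smooth2_diff by blast
  define A where "A = (\<lambda>i. a i (x,y))"
  define X where "X = (\<lambda>i. dx (a i) (x,y))"
  define Y where "Y = (\<lambda>i. dy (a i) (x,y))"
  define L where "L = \<Lambda> (x,y)"
  define Lx where "Lx = dx \<Lambda> (x,y)"
  define Ly where "Ly = dy \<Lambda> (x,y)"
  have Phi: "(1+t^2)*Lx*(\<Sum>i\<le>n. real(n-i)*A i*t^i) + (1+t^2)*Ly*(\<Sum>i\<le>n. real i*A i*t^(i-1))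
      + 2*L*(\<Sum>i\<le>n. X i*t^i) + 2*L*(t*(\<Sum>i\<le>n. Y i*t^i)) = 0" for t
    unfolding A_def X_def Y_def L_def Lx_def Ly_def
    by (rule PhiLemma[OF Lpos DL Da integral])
  note E = polyE[OF Phi]
  have J3: "\<And>j. j \<in> {j. 2 * j \<le> n - 3} \<Longrightarrow> \<forall>z. a (n - 3 - 2*j) differentiable (at z)" using Da by simp
  have J2: "\<And>j. j \<in> {j. 2 * j \<le> n - 2} \<Longrightarrow> \<forall>z. a (n - 2 - 2*j) differentiable (at z)" using Da by simp
  have fk1: "a (n-1) = (\<lambda>z. (1 * (\<Sum>j\<in>{j. 2 * j \<le> n - 3}. (-1)^j * a (n - 3 - 2 * j) z) + 0) * 1)"
    using kol1 by (auto intro!: ext)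
  have fk2: "a n = (\<lambda>z. (1 * (\<Sum>j\<in>{j. 2 * j \<le> n - 2}. (-1)^j * a (n - 2 - 2 * j) z) + c2) * 1)"
    using kol2 by (auto intro!: ext)
  have DC: "\<forall>z. (\<lambda>_. 1::real) differentiable (at z)" by simp
  have dx1: "dx (\<lambda>_. 1::real) (x,y) = 0" and dy1: "dy (\<lambda>_. 1::real) (x,y) = 0" by (simp_all add: dx_def dy_def)
  have kX1: "X (n-1) = (\<Sum>j\<in>{j. 2 * j \<le> n - 3}. (-1)^j * X (n - 3 - 2 * j))"
    unfolding X_def fk1
    using DERIV_fx[where J="{j. 2 * j \<le> n - 3}" and a=a and f="\<lambda>j. n - 3 - 2*j" and \<Lambda>="\<lambda>_. 1" and s=1 and c="\<lambda>j. (-1)^j" and K=0 and x=x and y=y, OF J3 DC] by (simp add: dx1)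
  have kX2: "X n = 0 + (\<Sum>j\<in>{j. 2 * j \<le> n - 2}. (-1)^j * X (n - 2 - 2 * j))"
    unfolding X_def
    apply (subst fk2)
    using DERIV_fx[where J="{j. 2 * j \<le> n - 2}" and a=a and f="\<lambda>j. n - 2 - 2*j" and \<Lambda>="\<lambda>_. 1" and s=1 and c="\<lambda>j. (-1)^j" and K=c2 and x=x and y=y, OF J2 DC] by (simp add: dx1)
  have kY1: "Y (n-1) = (\<Sum>j\<in>{j. 2 * j \<le> n - 3}. (-1)^j * Y (n - 3 - 2 * j))"
    unfolding Y_def fk1
    using DERIV_fy[where J="{j. 2 * j \<le> n - 3}" and a=a and f="\<lambda>j. n - 3 - 2*j" and \<Lambda>="\<lambda>_. 1" and s=1 and c="\<lambda>j. (-1)^j" and K=0 and x=x and y=y, OF J3 DC] by (simp add: dy1)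
  have kY2: "Y n = 0 + (\<Sum>j\<in>{j. 2 * j \<le> n - 2}. (-1)^j * Y (n - 2 - 2 * j))"
    unfolding Y_def
    apply (subst fk2)
    using DERIV_fy[where J="{j. 2 * j \<le> n - 2}" and a=a and f="\<lambda>j. n - 2 - 2*j" and \<Lambda>="\<lambda>_. 1" and s=1 and c="\<lambda>j. (-1)^j" and K=c2 and x=x and y=y, OF J2 DC] by (simp add: dy1)
  have zA: "Zs n A = \<i>^n * of_real c2"
    unfolding Zs_def A_def by (rule kolZ[OF n3]) (rule kol1, rule kol2)
  have zX: "Zs n X = 0"
    unfolding Zs_def using kolZ[OF n3 kX1 kX2] by simp
  have zY: "Zs n Y = 0"
    unfolding Zs_def using kolZ[OF n3 kY1 kY2] by simp
  have vinv: "V = - \<i> * (\<i> * V)" for V :: complex by (simp flip: mult.assoc)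
  have vA: "Vs n A = - \<i> * (of_nat n * Zs n A - Ws n A)"
    by (subst vinv) (simp only: V_rel)
  have vX: "Vs n X = \<i> * Ws n X"
    by (subst vinv) (simp add: V_rel zX)
  have vY: "Vs n Y = \<i> * Ws n Y"
    by (subst vinv) (simp add: V_rel zY)
  have E2: "of_real Lx * Ws n A - \<i> * of_real Ly * (of_nat n * Zs n A - Ws n A) + of_real L * Ws n X + \<i> * of_real L * Ws n Y = 0"
  proof -
    have "2 * \<i> * (of_real Lx * Ws n A - \<i> * of_real Ly * (of_nat n * Zs n A - Ws n A) + of_real L * Ws n X + \<i> * of_real L * Ws n Y) = 0"
      using E unfolding vA vX vY zY by (simp add: algebra_simps)
    thus ?thesis by simp
  qed
  show "dx (funP n a c2 \<Lambda>) z + dy (funQ n a c2 \<Lambda>) z = 0 \<and>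
             dx (funQ n a c2 \<Lambda>) z + dy (funR n a c2 \<Lambda>) z = 0"
  proof (cases "even n")
    case True
    then obtain k where nk: "n = 2*k" by blast
    have k2: "k \<ge> 2" using n3 nk by simp
    have hk: "n div 2 = k" using nk by simp
    have s1: "{..<k} = {0..k-1}" using k2 by auto
    have s2: "{..<k-1} = {0..k-2}" using k2 by auto
    have Jd1: "\<And>j. j \<in> {0..k-1} \<Longrightarrow> \<forall>z. a (2*j) differentiable (at z)"
      by (rule Da) (use nk in auto)
    have Jd2: "\<And>j. j \<in> {0..k-2} \<Longrightarrow> \<forall>z. a (2*j+1) differentiable (at z)"
      by (rule Da) (use nk k2 in auto)
    have eqP: "funP n a c2 \<Lambda> = (\<lambda>z. (1 * (\<Sum>j\<in>{0..k-1}. ((-1)^j * (real n - 2 * real j)) * a (2*j) z) + 0) * \<Lambda> z)"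
      by (rule ext) (simp add: funP_def hk True)
    have eqQ: "funQ n a c2 \<Lambda> = (\<lambda>z. (-1 * (\<Sum>j\<in>{0..k-2}. ((-1)^j * (real n - 2 - 2 * real j)) * a (2*j+1) z) + 0) * \<Lambda> z)"
      by (rule ext) (simp add: funQ_def hk True)
    have eqR: "funR n a c2 \<Lambda> = (\<lambda>z. (-1 * (\<Sum>j\<in>{0..k-1}. ((-1)^j * (real n - 2 * real j)) * a (2*j) z) + (-1)^k * real n * c2) * \<Lambda> z)"
      by (rule ext) (simp add: funR_def hk True)
    define SEA where "SEA = (\<Sum>j\<in>{0..k-1}. ((-1)^j * (real n - 2 * real j)) * A (2*j))"
    define SEX where "SEX = (\<Sum>j\<in>{0..k-1}. ((-1)^j * (real n - 2 * real j)) * X (2*j))"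
    define SEY where "SEY = (\<Sum>j\<in>{0..k-1}. ((-1)^j * (real n - 2 * real j)) * Y (2*j))"
    define SOA where "SOA = (\<Sum>j\<in>{0..k-2}. ((-1)^j * (real n - 2 - 2 * real j)) * A (2*j+1))"
    define SOX where "SOX = (\<Sum>j\<in>{0..k-2}. ((-1)^j * (real n - 2 - 2 * real j)) * X (2*j+1))"
    define SOY where "SOY = (\<Sum>j\<in>{0..k-2}. ((-1)^j * (real n - 2 - 2 * real j)) * Y (2*j+1))"
    have dP: "dx (funP n a c2 \<Lambda>) (x,y) = SEX * L + Lx * SEA"
      unfolding eqP SEX_def SEA_def X_def A_def L_def Lx_def
      using DERIV_fx[where J="{0..k-1}" and a=a and f="\<lambda>j. 2*j" and \<Lambda>=\<Lambda> and s=1 and c="\<lambda>j. (-1)^j * (real n - 2 * real j)" and K=0 and x=x and y=y, OF Jd1 DL]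
      by simp
    have dQx: "dx (funQ n a c2 \<Lambda>) (x,y) = - SOX * L - Lx * SOA"
      unfolding eqQ SOX_def SOA_def X_def A_def L_def Lx_def
      using DERIV_fx[where J="{0..k-2}" and a=a and f="\<lambda>j. 2*j+1" and \<Lambda>=\<Lambda> and s="-1" and c="\<lambda>j. (-1)^j * (real n - 2 - 2 * real j)" and K=0 and x=x and y=y, OF Jd2 DL]
      by simp
    have dQy: "dy (funQ n a c2 \<Lambda>) (x,y) = - SOY * L - Ly * SOA"
      unfolding eqQ SOY_def SOA_def Y_def A_def L_def Ly_def
      using DERIV_fy[where J="{0..k-2}" and a=a and f="\<lambda>j. 2*j+1" and \<Lambda>=\<Lambda> and s="-1" and c="\<lambda>j. (-1)^j * (real n - 2 - 2 * real j)" and K=0 and x=x and y=y, OF Jd2 DL]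
      by simp
    have dR: "dy (funR n a c2 \<Lambda>) (x,y) = - SEY * L + Ly * (- SEA + (-1)^k * real n * c2)"
      unfolding eqR SEY_def SEA_def Y_def A_def L_def Ly_def
      using DERIV_fy[where J="{0..k-1}" and a=a and f="\<lambda>j. 2*j" and \<Lambda>=\<Lambda> and s="-1" and c="\<lambda>j. (-1)^j * (real n - 2 * real j)" and K="(-1)^k * real n * c2" and x=x and y=y, OF Jd1 DL]
      by simp
    have k1: "k \<ge> 1" using k2 by simp
    have wA: "Ws n A = of_real SEA + \<i> * of_real (SOA + (\<Sum>j<k. (-1)^j * A (2*j+1)))"
      using even_W[OF nk k1, of A] unfolding SEA_def SOA_def s1 s2 by simp
    have wX: "Ws n X = of_real SEX + \<i> * of_real (SOX + (\<Sum>j<k. (-1)^j * X (2*j+1)))"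
      using even_W[OF nk k1, of X] unfolding SEX_def SOX_def s1 s2 by simp
    have wY: "Ws n Y = of_real SEY + \<i> * of_real (SOY + (\<Sum>j<k. (-1)^j * Y (2*j+1)))"
      using even_W[OF nk k1, of Y] unfolding SEY_def SOY_def s1 s2 by simp
    have ipn: "\<i>^n = of_real ((-1)^k)" unfolding nk by (rule ipow_even)
    have zA2: "of_real (\<Sum>j\<le>k. (-1)^j * A (2*j)) + \<i> * of_real (\<Sum>j<k. (-1)^j * A (2*j+1)) = of_real ((-1)^k * c2)"
      using zA even_Z[OF nk, of A] ipn by simp
    have ZIA: "(\<Sum>j<k. (-1)^j * A (2*j+1)) = 0" using arg_cong[OF zA2, of Im] by simp
    have ZIX: "(\<Sum>j<k. (-1)^j * X (2*j+1)) = 0" using arg_cong[OF zX, of Im] even_Z[OF nk, of X] by simp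
    have ZIY: "(\<Sum>j<k. (-1)^j * Y (2*j+1)) = 0" using arg_cong[OF zY, of Im] even_Z[OF nk, of Y] by simp
    have zA3: "Zs n A = of_real ((-1)^k * c2)" using zA ipn by simp
    have C: "of_real Lx * (of_real SEA + \<i> * of_real SOA) - \<i> * of_real Ly * (of_nat n * of_real ((-1)^k * c2) - (of_real SEA + \<i> * of_real SOA))
       + of_real L * (of_real SEX + \<i> * of_real SOX) + \<i> * of_real L * (of_real SEY + \<i> * of_real SOY) = 0"
      using E2 unfolding wA wX wY zA3 ZIA ZIX ZIY by simp
    have R1: "Lx * SEA - Ly * SOA + L * SEX - L * SOY = 0"
      using arg_cong[OF C, of Re] by (simp add: algebra_simps)
    have R2: "Lx * SOA - Ly * (real n * ((-1)^k * c2) - SEA) + L * SOX + L * SEY = 0"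
      using arg_cong[OF C, of Im] by (simp add: algebra_simps)
    show ?thesis unfolding z dP dQx dQy dR using R1 R2 by (simp add: algebra_simps)
  next
    case False
    then obtain k where nk: "n = 2*k+1" using oddE by blast
    have k1: "k \<ge> 1" using n3 nk by simp
    have hk: "n div 2 = k" using nk by simp
    have s1: "{..<k} = {0..k-1}" using k1 by auto
    have Jd1: "\<And>j. j \<in> {0..k-1} \<Longrightarrow> \<forall>z. a (2*j) differentiable (at z)"
      by (rule Da) (use nk in auto)
    have Jd2: "\<And>j. j \<in> {0..k-1} \<Longrightarrow> \<forall>z. a (2*j+1) differentiable (at z)"
      by (rule Da) (use nk in auto)
    have eqP: "funP n a c2 \<Lambda> = (\<lambda>z. (1 * (\<Sum>j\<in>{0..k-1}. ((-1)^j * (real n - 1 - 2 * real j)) * a (2*j+1) z) + 0) * \<Lambda> z)"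
      by (rule ext) (simp add: funP_def hk False)
    have eqQ: "funQ n a c2 \<Lambda> = (\<lambda>z. (1 * (\<Sum>j\<in>{0..k-1}. ((-1)^j * (real n - 1 - 2 * real j)) * a (2*j) z) + 0) * \<Lambda> z)"
      by (rule ext) (simp add: funQ_def hk False)
    have eqR: "funR n a c2 \<Lambda> = (\<lambda>z. (-1 * (\<Sum>j\<in>{0..k-1}. ((-1)^j * (real n - 1 - 2 * real j)) * a (2*j+1) z) + (-1)^k * real n * c2) * \<Lambda> z)"
      by (rule ext) (simp add: funR_def hk False)
    define TEA where "TEA = (\<Sum>j\<in>{0..k-1}. ((-1)^j * (real n - 1 - 2 * real j)) * A (2*j))"
    define TEX where "TEX = (\<Sum>j\<in>{0..k-1}. ((-1)^j * (real n - 1 - 2 * real j)) * X (2*j))"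
    define TEY where "TEY = (\<Sum>j\<in>{0..k-1}. ((-1)^j * (real n - 1 - 2 * real j)) * Y (2*j))"
    define TOA where "TOA = (\<Sum>j\<in>{0..k-1}. ((-1)^j * (real n - 1 - 2 * real j)) * A (2*j+1))"
    define TOX where "TOX = (\<Sum>j\<in>{0..k-1}. ((-1)^j * (real n - 1 - 2 * real j)) * X (2*j+1))"
    define TOY where "TOY = (\<Sum>j\<in>{0..k-1}. ((-1)^j * (real n - 1 - 2 * real j)) * Y (2*j+1))"
    have dP: "dx (funP n a c2 \<Lambda>) (x,y) = TOX * L + Lx * TOA"
      unfolding eqP TOX_def TOA_def X_def A_def L_def Lx_def
      using DERIV_fx[where J="{0..k-1}" and a=a and f="\<lambda>j. 2*j+1" and \<Lambda>=\<Lambda> and s=1 and c="\<lambda>j. (-1)^j * (real n - 1 - 2 * real j)" and K=0 and x=x and y=y, OF Jd2 DL]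
      by simp
    have dQx: "dx (funQ n a c2 \<Lambda>) (x,y) = TEX * L + Lx * TEA"
      unfolding eqQ TEX_def TEA_def X_def A_def L_def Lx_def
      using DERIV_fx[where J="{0..k-1}" and a=a and f="\<lambda>j. 2*j" and \<Lambda>=\<Lambda> and s=1 and c="\<lambda>j. (-1)^j * (real n - 1 - 2 * real j)" and K=0 and x=x and y=y, OF Jd1 DL]
      by simp
    have dQy: "dy (funQ n a c2 \<Lambda>) (x,y) = TEY * L + Ly * TEA"
      unfolding eqQ TEY_def TEA_def Y_def A_def L_def Ly_def
      using DERIV_fy[where J="{0..k-1}" and a=a and f="\<lambda>j. 2*j" and \<Lambda>=\<Lambda> and s=1 and c="\<lambda>j. (-1)^j * (real n - 1 - 2 * real j)" and K=0 and x=x and y=y, OF Jd1 DL]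
      by simp
    have dR: "dy (funR n a c2 \<Lambda>) (x,y) = - TOY * L + Ly * (- TOA + (-1)^k * real n * c2)"
      unfolding eqR TOY_def TOA_def Y_def A_def L_def Ly_def
      using DERIV_fy[where J="{0..k-1}" and a=a and f="\<lambda>j. 2*j+1" and \<Lambda>=\<Lambda> and s="-1" and c="\<lambda>j. (-1)^j * (real n - 1 - 2 * real j)" and K="(-1)^k * real n * c2" and x=x and y=y, OF Jd2 DL]
      by simp
    have wA: "Ws n A = of_real (TEA + (\<Sum>j\<le>k. (-1)^j * A (2*j))) + \<i> * of_real TOA"
      using odd_W[OF nk, of A] unfolding TEA_def TOA_def s1 by simp
    have wX: "Ws n X = of_real (TEX + (\<Sum>j\<le>k. (-1)^j * X (2*j))) + \<i> * of_real TOX"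
      using odd_W[OF nk, of X] unfolding TEX_def TOX_def s1 by simp
    have wY: "Ws n Y = of_real (TEY + (\<Sum>j\<le>k. (-1)^j * Y (2*j))) + \<i> * of_real TOY"
      using odd_W[OF nk, of Y] unfolding TEY_def TOY_def s1 by simp
    have ipn: "\<i>^n = \<i> * of_real ((-1)^k)" unfolding nk by (rule ipow_odd)
    have zA2: "of_real (\<Sum>j\<le>k. (-1)^j * A (2*j)) + \<i> * of_real (\<Sum>j\<le>k. (-1)^j * A (2*j+1)) = \<i> * of_real ((-1)^k * c2)"
      using zA odd_Z[OF nk, of A] ipn by simp
    have ZRA: "(\<Sum>j\<le>k. (-1)^j * A (2*j)) = 0" using arg_cong[OF zA2, of Re] by simp
    have ZRX: "(\<Sum>j\<le>k. (-1)^j * X (2*j)) = 0" using arg_cong[OF zX, of Re] odd_Z[OF nk, of X] by simp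
    have ZRY: "(\<Sum>j\<le>k. (-1)^j * Y (2*j)) = 0" using arg_cong[OF zY, of Re] odd_Z[OF nk, of Y] by simp
    have zA3: "Zs n A = \<i> * of_real ((-1)^k * c2)" using zA ipn by simp
    have C: "of_real Lx * (of_real TEA + \<i> * of_real TOA) - \<i> * of_real Ly * (of_nat n * (\<i> * of_real ((-1)^k * c2)) - (of_real TEA + \<i> * of_real TOA))
       + of_real L * (of_real TEX + \<i> * of_real TOX) + \<i> * of_real L * (of_real TEY + \<i> * of_real TOY) = 0"
      using E2 unfolding wA wX wY zA3 ZRA ZRX ZRY by simp
    have R1: "Lx * TEA + Ly * (real n * ((-1)^k * c2) - TOA) + L * TEX - L * TOY = 0"
      using arg_cong[OF C, of Re] by (simp add: algebra_simps)
    have R2: "Lx * TOA + Ly * TEA + L * TOX + L * TEY = 0"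
      using arg_cong[OF C, of Im] by (simp add: algebra_simps)
    show ?thesis unfolding z dP dQx dQy dR using R1 R2 by (simp add: algebra_simps)
  qed
qed


end
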